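(* Let $A$ be a finite alphabet and let $w=\mu^{\omega}(a)$, where $a\in A$ and $\mu$ is an $r$-uniform morphism with $r\ge 2$ that is prolongable on $a$. Suppose $w$ is aperiodic and uniformly recurrent. Then there is a constant $c$, depending only on $w$, such that for every positive integer $k$ and every index $i\ge 0$ of $w$, there is a $k$-antipower with block length at most $ck$ starting at position $i$ of $w$.
   Context: Words are indexed from $0$; infinite words are infinite to the right. A $k$-antipower is a word that is the concatenation of $k$ pairwise distinct words (blocks) of equal length; that common length is the block length. A morphism $\mu$ of $A^{\infty}=A^*\cup A^{\omega}$ satisfies $\mu(uv)=\mu(u)\mu(v)$ for finite $u$; it is $r$-uniform if $|\mu(b)|=r$ for all $b\in A$; it is prolongable on $a$ if $\mu(a)$ begins with $a$, in which case $\mu^{\omega}(a)$ is the infinite word having every $\mu^n(a)$ as a prefix. An infinite word is aperiodic if it has no periodic suffix. An infinite word $w$ is uniformly recurrent if for every integer $a$ there is an integer $b$ such that every length-$a$ substring (factor of consecutive letters) of $w$ occurs in every length-$b$ substring of $w$. *)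

theory Defs
  imports Main
begin

definition morph_apply :: "('a \<Rightarrow> 'a list) \<Rightarrow> 'a list \<Rightarrow> 'a list" where
  "morph_apply \<mu> xs = concat (map \<mu> xs)"

definition uniform_morphism :: "nat \<Rightarrow> ('a \<Rightarrow> 'a list) \<Rightarrow> bool" where
  "uniform_morphism r \<mu> \<longleftrightarrow> (\<forall>b. length (\<mu> b) = r)"

definition prolongable_on :: "('a \<Rightarrow> 'a list) \<Rightarrow> 'a \<Rightarrow> bool" where
  "prolongable_on \<mu> a \<longleftrightarrow> \<mu> a \<noteq> [] \<and> hd (\<mu> a) = a"

text \<open>w is mu^omega(a): every mu^n(a) is a prefix of w.\<close>
definition is_fixed_point_word :: "('a \<Rightarrow> 'a list) \<Rightarrow> 'a \<Rightarrow> (nat \<Rightarrow> 'a) \<Rightarrow> bool" where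
  "is_fixed_point_word \<mu> a w \<longleftrightarrow>
     (\<forall>n i. i < length ((morph_apply \<mu> ^^ n) [a]) \<longrightarrow> w i = ((morph_apply \<mu> ^^ n) [a]) ! i)"

definition aperiodic :: "(nat \<Rightarrow> 'a) \<Rightarrow> bool" where
  "aperiodic w \<longleftrightarrow> \<not> (\<exists>p>0. \<exists>N. \<forall>i\<ge>N. w (i + p) = w i)"

definition uniformly_recurrent :: "(nat \<Rightarrow> 'a) \<Rightarrow> bool" where
  "uniformly_recurrent w \<longleftrightarrow>
     (\<forall>m. \<exists>b. \<forall>i j. \<exists>t. t + m \<le> b \<and> (\<forall>s<m. w (i + s) = w (j + t + s)))"

definition antipower_at :: "(nat \<Rightarrow> 'a) \<Rightarrow> nat \<Rightarrow> nat \<Rightarrow> nat \<Rightarrow> bool" where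
  "antipower_at w i k l \<longleftrightarrow>
     (\<forall>p<k. \<forall>q<k. p \<noteq> q \<longrightarrow>
        map (\<lambda>s. w (i + p * l + s)) [0..<l] \<noteq> map (\<lambda>s. w (i + q * l + s)) [0..<l])"

end

theory Submission
  imports Defs
begin


definition fac :: "(nat \<Rightarrow> 'b) \<Rightarrow> nat \<Rightarrow> nat \<Rightarrow> 'b list" where
  "fac u n x = map (\<lambda>s. u (x+s)) [0..<n]"

definition Fs :: "(nat \<Rightarrow> 'b) \<Rightarrow> nat \<Rightarrow> 'b list set" where
  "Fs u n = range (fac u n)"

lemma fac_eq_iff: "fac u n x = fac u n y \<longleftrightarrow> (\<forall>s<n. u (x+s) = u (y+s))"
  by (auto simp: fac_def)

lemma Fs_sub: "Fs u n \<subseteq> {xs. set xs \<subseteq> range u \<and> length xs = n}"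
  by (auto simp: Fs_def fac_def)

lemma Fs_finite: "finite (range u) \<Longrightarrow> finite (Fs u n)"
  by (rule finite_subset[OF Fs_sub finite_lists_length_eq])

lemma Fs_card_le: "finite (range u) \<Longrightarrow> card (Fs u n) \<le> card (range u) ^ n"
  using card_mono[OF finite_lists_length_eq Fs_sub] card_lists_length_eq by metis

lemma Fs_0: "Fs u 0 = {[]}"
  by (auto simp: Fs_def fac_def)

lemma fac_take: "m \<le> n \<Longrightarrow> take m (fac u n x) = fac u m x"
  by (simp add: fac_def take_map)

lemma Fs_take: "m \<le> n \<Longrightarrow> Fs u m = take m ` Fs u n"
  by (auto simp: Fs_def fac_take image_iff)

lemma MH_step:
  assumes aper: "aperiodic u" and fin: "finite (range u)"
  shows "card (Fs u n) < card (Fs u (Suc n))"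
proof -
  have le: "card (Fs u n) \<le> card (Fs u (Suc n))"
    using Fs_take[of n "Suc n" u] card_image_le[OF Fs_finite[OF fin]] by simp
  show ?thesis
  proof (rule ccontr)
    assume "\<not> ?thesis"
    hence eq: "card (take n ` Fs u (Suc n)) = card (Fs u (Suc n))"
      using le Fs_take[of n "Suc n" u] by simp
    have inj: "inj_on (take n) (Fs u (Suc n))"
      by (rule eq_card_imp_inj_on[OF Fs_finite[OF fin] eq])
    have ext: "u (x+n) = u (y+n)" if "fac u n x = fac u n y" for x y
    proof -
      have "take n (fac u (Suc n) x) = take n (fac u (Suc n) y)"
        using that fac_take[of n "Suc n" u] by simp
      hence "fac u (Suc n) x = fac u (Suc n) y"
        using inj by (auto simp: Fs_def inj_on_def)
      thus ?thesis by (auto simp: fac_eq_iff)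
    qed
    have "\<not> inj_on (fac u n) {0..card (Fs u n)}"
    proof
      assume "inj_on (fac u n) {0..card (Fs u n)}"
      moreover have "fac u n ` {0..card (Fs u n)} \<subseteq> Fs u n" by (auto simp: Fs_def)
      ultimately have "card {0..card (Fs u n)} \<le> card (Fs u n)" using card_inj_on_le Fs_finite[OF fin] by blast
      thus False by simp
    qed
    then obtain x y where xy: "x \<noteq> y" "fac u n x = fac u n y"
      by (auto simp: inj_on_def)
    have "\<exists>x y. x < y \<and> fac u n x = fac u n y"
      using xy by (metis linorder_neq_iff)
    then obtain x y where xy: "x < y" "fac u n x = fac u n y" by blast
    have P: "fac u n (x+t) = fac u n (y+t)" for t
    proof (induction t)
      case 0 then show ?case using xy by simp
    next
      case (Suc t)
      have e: "u (x+t+n) = u (y+t+n)" using ext[OF Suc] by simp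
      show ?case unfolding fac_eq_iff
      proof (intro allI impI)
        fix s assume s: "s < n"
        show "u (x + Suc t + s) = u (y + Suc t + s)"
        proof (cases "Suc s < n")
          case True
          then show ?thesis using Suc unfolding fac_eq_iff
            by (metis add_Suc_right add_Suc_shift)
        next
          case False
          hence "s = n - 1" using s by simp
          then show ?thesis using e s by (simp add: add.assoc)
        qed
      qed
    qed
    have "\<forall>i\<ge>x+n. u (i + (y-x)) = u i"
    proof (intro allI impI)
      fix i assume "x + n \<le> i"
      then obtain t where "i = x + t + n" by (metis add.commute le_iff_add add.assoc)
      with ext[OF P[of t]] xy(1) show "u (i + (y-x)) = u i"
        by (simp add: algebra_simps)
    qed
    thus False using aper xy(1) unfolding aperiodic_def
      by (metis zero_less_diff)
  qed
qed

lemma MH: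
  assumes aper: "aperiodic u" and fin: "finite (range u)"
  shows "n + 1 \<le> card (Fs u n)"
proof (induction n)
  case 0 then show ?case by (simp add: Fs_0)
next
  case (Suc n) then show ?case using MH_step[OF aper fin, of n] by simp
qed



lemma fac_lift:
  assumes G: "\<forall>n n' j. j < r \<longrightarrow> u n = u n' \<longrightarrow> u (r*n+j) = u (r*n'+j)"
    and eq: "fac u l y = fac u l y'" and j: "j < r" and l1: "l \<ge> 1"
  shows "fac u (r*(l-1)+1) (r*y+j) = fac u (r*(l-1)+1) (r*y'+j)"
  unfolding fac_eq_iff
proof (intro allI impI)
  fix s assume s: "s < r*(l-1)+1"
  define q where "q = (j+s) div r"
  define e where "e = (j+s) mod r"
  have r0: "r > 0" using j by simp
  have dec: "j + s = r*q + e" unfolding q_def e_def by simp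
  have e: "e < r" unfolding e_def using r0 by simp
  have "j + s < r * l"
  proof (cases l)
    case 0 then show ?thesis using l1 by simp
  next
    case (Suc l') then show ?thesis using s j by (simp add: algebra_simps)
  qed
  hence q: "q < l" unfolding q_def by (simp add: div_less_iff_less_mult mult.commute r0)
  have "u (y+q) = u (y'+q)" using eq q by (simp add: fac_eq_iff)
  hence "u (r*(y+q)+e) = u (r*(y'+q)+e)" using G e by blast
  moreover have "r*y+j+s = r*(y+q)+e" "r*y'+j+s = r*(y'+q)+e" using dec by (simp_all add: algebra_simps)
  ultimately show "u (r*y+j+s) = u (r*y'+j+s)" by simp
qed

lemma count_step:
  assumes G: "\<forall>n n' j. j < r \<longrightarrow> u n = u n' \<longrightarrow> u (r*n+j) = u (r*n'+j)"
    and fin: "finite (range u)" and r: "r \<ge> 1" and l1: "l \<ge> 1"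
    and H: "\<forall>x. \<exists>y. fac u (r*(l-1)+1) y = fac u (r*(l-1)+1) x \<and> y mod r \<noteq> x mod r"
  shows "2 * card (Fs u (r*(l-1)+1)) \<le> r * card (Fs u l)"
proof -
  define l' where "l' = r*(l-1)+1"
  define \<Psi> where "\<Psi> = (\<lambda>(z, j). fac u l' (r * (SOME y. fac u l y = z) + j))"
  define D where "D = Fs u l \<times> {..<r}"
  define A where "A = (\<lambda>W. {d \<in> D. \<Psi> d = W})"
  have finD: "finite D" unfolding D_def using Fs_finite[OF fin] by simp
  have cardD: "card D = card (Fs u l) * r" unfolding D_def by (simp add: card_cartesian_product)
  have Psi: "\<Psi> (fac u l (x div r), x mod r) = fac u l' x" for x
  proof -
    have ex: "\<exists>y. fac u l y = fac u l (x div r)" by blast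
    define y0 where "y0 = (SOME y. fac u l y = fac u l (x div r))"
    have y0: "fac u l y0 = fac u l (x div r)" unfolding y0_def using someI_ex[OF ex] .
    have "\<Psi> (fac u l (x div r), x mod r) = fac u l' (r*y0 + x mod r)"
      unfolding \<Psi>_def y0_def by simp
    also have "\<dots> = fac u l' (r*(x div r) + x mod r)"
      unfolding l'_def by (rule fac_lift[OF G y0]) (use r l1 in simp_all)
    also have "\<dots> = fac u l' x" by simp
    finally show ?thesis .
  qed
  have mem: "(fac u l (x div r), x mod r) \<in> D" for x
    unfolding D_def Fs_def using r by simp
  have two: "2 \<le> card (A W)" if W: "W \<in> Fs u l'" for W
  proof -
    obtain x where x: "W = fac u l' x" using W unfolding Fs_def by blast
    obtain y where y: "fac u l' y = fac u l' x" "y mod r \<noteq> x mod r" using H unfolding l'_def by blast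
    have "(fac u l (x div r), x mod r) \<in> A W" "(fac u l (y div r), y mod r) \<in> A W"
      unfolding A_def using mem Psi x y by auto
    moreover have "(fac u l (x div r), x mod r) \<noteq> (fac u l (y div r), y mod r)" using y by simp
    moreover have "finite (A W)" unfolding A_def using finD by simp
    ultimately have "card {(fac u l (x div r), x mod r), (fac u l (y div r), y mod r)} \<le> card (A W)"
      by (intro card_mono) auto
    thus ?thesis using y(2) by simp
  qed
  have "card (\<Union>(A ` Fs u l')) = (\<Sum>W\<in>Fs u l'. card (A W))"
    by (rule card_UN_disjoint) (auto simp: A_def Fs_finite[OF fin] finD)
  moreover have "(\<Sum>W\<in>Fs u l'. card (A W)) \<ge> (\<Sum>W\<in>Fs u l'. 2)"
    by (rule sum_mono) (use two in auto)
  moreover have "card (\<Union>(A ` Fs u l')) \<le> card D"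
    by (rule card_mono[OF finD]) (auto simp: A_def)
  ultimately show ?thesis using cardD unfolding l'_def by (simp add: mult.commute)
qed



lemma sync:
  assumes G: "\<forall>n n' j. j < r \<longrightarrow> u n = u n' \<longrightarrow> u (r*n+j) = u (r*n'+j)"
    and fin: "finite (range u)" and r: "r \<ge> 1" and aper: "aperiodic u"
    and K: "card (range u) \<le> K"
  shows "\<exists>x0. \<forall>x. fac u (r^(2*K)+1) x = fac u (r^(2*K)+1) x0 \<longrightarrow> x mod r = x0 mod r"
proof (rule ccontr)
  define M where "M = 2*K"
  assume "\<not> ?thesis"
  hence HM: "\<forall>x. \<exists>y. fac u (r^M+1) y = fac u (r^M+1) x \<and> y mod r \<noteq> x mod r"
    unfolding M_def by metis
  have Hj: "\<forall>x. \<exists>y. fac u (r^j+1) y = fac u (r^j+1) x \<and> y mod r \<noteq> x mod r" if "j \<le> M" for j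
  proof
    fix x
    obtain y where y: "fac u (r^M+1) y = fac u (r^M+1) x" "y mod r \<noteq> x mod r" using HM by blast
    have "r^j \<le> r^M" using that r by (simp add: power_increasing)
    hence "fac u (r^j+1) y = fac u (r^j+1) x" using y(1) fac_take[of "r^j+1" "r^M+1" u] by (metis add_le_mono1)
    thus "\<exists>y. fac u (r^j+1) y = fac u (r^j+1) x \<and> y mod r \<noteq> x mod r" using y(2) by blast
  qed
  have step: "2 * card (Fs u (r^(Suc j)+1)) \<le> r * card (Fs u (r^j+1))" if "j < M" for j
  proof -
    have e: "r*((r^j+1)-1)+1 = r^(Suc j)+1" by simp
    show ?thesis using count_step[OF G fin r, of "r^j+1"] Hj[of "Suc j"] that unfolding e by simp
  qed
  have ind: "2^j * card (Fs u (r^j+1)) \<le> r^j * card (Fs u 2)" if "j \<le> M" for j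
    using that
  proof (induction j)
    case 0 then show ?case by (simp add: numeral_2_eq_2)
  next
    case (Suc j)
    have "2^(Suc j) * card (Fs u (r^(Suc j)+1)) = 2^j * (2 * card (Fs u (r^(Suc j)+1)))" by simp
    also have "\<dots> \<le> 2^j * (r * card (Fs u (r^j+1)))" using step[of j] Suc.prems by simp
    also have "\<dots> = r * (2^j * card (Fs u (r^j+1)))" by simp
    also have "\<dots> \<le> r * (r^j * card (Fs u 2))" using Suc by simp
    finally show ?case by simp
  qed
  have c2: "card (Fs u 2) \<le> K^2"
    using Fs_card_le[OF fin, of 2] K by (meson le_trans power_mono zero_le)
  have mh: "r^M + 2 \<le> card (Fs u (r^M+1))" using MH[OF aper fin, of "r^M+1"] by simp
  have "2^M * (r^M + 2) \<le> r^M * K^2"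
  proof -
    have "2^M * (r^M + 2) \<le> 2^M * card (Fs u (r^M+1))" using mh by (rule mult_le_mono2)
    also have "\<dots> \<le> r^M * card (Fs u 2)" using ind[of M] by simp
    also have "\<dots> \<le> r^M * K^2" using c2 by simp
    finally show ?thesis .
  qed
  moreover have "K^2 \<le> 2^M"
  proof -
    have "K \<le> 2^K" by (simp add: less_imp_le)
    hence "K^2 \<le> (2^K)^2" by (simp add: power_mono)
    thus ?thesis unfolding M_def by (simp add: power_mult[symmetric] mult.commute)
  qed
  ultimately have "2^M * (r^M + 2) \<le> r^M * 2^M" by (meson le_trans mult_le_mono2)
  moreover have "r^M * 2^M < 2^M * (r^M + 2)" by simp
  ultimately show False by simp
qed



definition blk :: "(nat \<Rightarrow> 'a) \<Rightarrow> nat \<Rightarrow> nat \<Rightarrow> nat \<Rightarrow> 'a list" where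
  "blk w r m k = fac w (r^m) (r^m*k)"

lemma blkE:
  fixes r :: nat and w :: "nat \<Rightarrow> 'a"
  assumes FP: "\<forall>k k' j. j < r \<longrightarrow> w k = w k' \<longrightarrow> w (r*k+j) = w (r*k'+j)"
    and h: "\<forall>q<r^m. w (r^m*n+q) = w (r^m*n'+q)" and t: "t < r^(Suc m)"
  shows "w (r^(Suc m)*n+t) = w (r^(Suc m)*n'+t)"
proof -
  have r0: "r > 0" using t by (metis gr0I mult_0 power_Suc zero_less_iff_neq_zero not_less0)
  define q where "q = t div r"
  define e where "e = t mod r"
  have e: "e < r" unfolding e_def using r0 by simp
  have q: "q < r^m" unfolding q_def using t r0
    by (simp add: div_less_iff_less_mult mult.commute)
  have d1: "r^(Suc m)*n+t = r*(r^m*n+q)+e" and d2: "r^(Suc m)*n'+t = r*(r^m*n'+q)+e"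
    unfolding q_def e_def by (simp_all add: algebra_simps)
  show ?thesis unfolding d1 d2 using FP e h q by blast
qed

lemma blk_letter:
  fixes r :: nat and w :: "nat \<Rightarrow> 'a"
  assumes FP: "\<forall>k k' j. j < r \<longrightarrow> w k = w k' \<longrightarrow> w (r*k+j) = w (r*k'+j)"
  shows "w k = w k' \<Longrightarrow> blk w r m k = blk w r m k'"
proof (induction m arbitrary: k k')
  case 0 then show ?case by (simp add: blk_def fac_def)
next
  case (Suc m)
  show ?case unfolding blk_def fac_eq_iff
  proof (intro allI impI)
    fix t assume t: "t < r^(Suc m)"
    have "\<forall>q<r^m. w (r^m*k+q) = w (r^m*k'+q)"
      using Suc.IH[OF Suc.prems] by (simp add: blk_def fac_eq_iff)
    from blkE[OF FP this t] show "w (r^(Suc m)*k+t) = w (r^(Suc m)*k'+t)" .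
  qed
qed

lemma blk_G:
  fixes r :: nat and w :: "nat \<Rightarrow> 'a"
  assumes FP: "\<forall>k k' j. j < r \<longrightarrow> w k = w k' \<longrightarrow> w (r*k+j) = w (r*k'+j)"
  shows "\<forall>n n' j. j < r \<longrightarrow> blk w r m n = blk w r m n' \<longrightarrow> blk w r m (r*n+j) = blk w r m (r*n'+j)"
proof (intro allI impI)
  fix n n' j assume j: "j < r" and eq: "blk w r m n = blk w r m n'"
  have h: "\<forall>q<r^m. w (r^m*n+q) = w (r^m*n'+q)" using eq by (simp add: blk_def fac_eq_iff)
  show "blk w r m (r*n+j) = blk w r m (r*n'+j)" unfolding blk_def fac_eq_iff
  proof (intro allI impI)
    fix t assume t: "t < r^m"
    have lt: "r^m*j+t < r^(Suc m)"
    proof -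
      have "r^m*j+t < r^m*j + r^m" using t by simp
      also have "\<dots> = r^m*(j+1)" by simp
      also have "\<dots> \<le> r^m*r" using j by (intro mult_le_mono2) simp
      finally show ?thesis by (simp add: mult.commute)
    qed
    have e1: "r^m*(r*n+j)+t = r^(Suc m)*n + (r^m*j+t)" and e2: "r^m*(r*n'+j)+t = r^(Suc m)*n' + (r^m*j+t)"
      by (simp_all add: algebra_simps)
    show "w (r^m*(r*n+j)+t) = w (r^m*(r*n'+j)+t)" unfolding e1 e2 by (rule blkE[OF FP h lt])
  qed
qed

lemma blk_aper:
  fixes r :: nat and w :: "nat \<Rightarrow> 'a"
  assumes aper: "aperiodic w" and r: "r \<ge> 1"
  shows "aperiodic (blk w r m)"
  unfolding aperiodic_def
proof
  assume "\<exists>p>0. \<exists>N. \<forall>i\<ge>N. blk w r m (i + p) = blk w r m i"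
  then obtain p N where p: "p > 0" and h: "\<forall>i\<ge>N. blk w r m (i + p) = blk w r m i" by blast
  have "\<forall>i\<ge>r^m*N. w (i + r^m*p) = w i"
  proof (intro allI impI)
    fix i assume i: "r^m*N \<le> i"
    have rm: "r^m > 0" using r by simp
    define k where "k = i div r^m"
    define q where "q = i mod r^m"
    have iq: "i = r^m*k + q" unfolding k_def q_def by simp
    have q: "q < r^m" unfolding q_def using rm by simp
    have "N \<le> k" unfolding k_def using i rm
      by (metis div_le_mono nonzero_mult_div_cancel_left less_not_refl2)
    hence "blk w r m (k+p) = blk w r m k" using h by blast
    hence "w (r^m*(k+p)+q) = w (r^m*k+q)" using q by (simp add: blk_def fac_eq_iff)
    thus "w (i + r^m*p) = w i" unfolding iq by (simp add: algebra_simps)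
  qed
  moreover have "r^m*p > 0" using p r by simp
  ultimately show False using aper unfolding aperiodic_def by blast
qed

lemma blk_range:
  fixes w :: "nat \<Rightarrow> 'a::finite" and r :: nat
  assumes FP: "\<forall>k k' j. j < r \<longrightarrow> w k = w k' \<longrightarrow> w (r*k+j) = w (r*k'+j)"
  shows "finite (range (blk w r m)) \<and> card (range (blk w r m)) \<le> card (UNIV :: 'a set)"
proof -
  have "range (blk w r m) \<subseteq> (\<lambda>b. blk w r m (SOME k. w k = b)) ` UNIV"
  proof
    fix z assume "z \<in> range (blk w r m)"
    then obtain k where z: "z = blk w r m k" by blast
    have "w (SOME k'. w k' = w k) = w k" by (rule someI_ex) blast
    hence "z = blk w r m (SOME k'. w k' = w k)" unfolding z by (metis blk_letter[OF FP])
    thus "z \<in> (\<lambda>b. blk w r m (SOME k. w k = b)) ` UNIV" by blast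
  qed
  moreover have "finite ((\<lambda>b::'a. blk w r m (SOME k. w k = b)) ` UNIV)" by simp
  moreover have "card ((\<lambda>b::'a. blk w r m (SOME k. w k = b)) ` UNIV) \<le> card (UNIV :: 'a set)" by (rule card_image_le) simp
  ultimately show ?thesis by (meson card_mono finite_subset le_trans)
qed



lemma mod_cancel_nat:
  assumes "(a + c) mod (r::nat) = (b + c) mod r"
  shows "a mod r = b mod r"
proof -
  have "(int a + int c) mod int r = (int b + int c) mod int r"
    using assms by (metis of_nat_add of_nat_mod)
  hence "((int a + int c) - int c) mod int r = ((int b + int c) - int c) mod int r"
    by (metis mod_diff_left_eq)
  hence "int a mod int r = int b mod int r" by simp
  thus ?thesis by (metis of_nat_mod of_nat_eq_iff)
qed

lemma rec:
  fixes w :: "nat \<Rightarrow> 'a::finite" and r :: nat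
  assumes FP: "\<forall>k k' j. j < r \<longrightarrow> w k = w k' \<longrightarrow> w (r*k+j) = w (r*k'+j)"
    and r: "r \<ge> 1" and aper: "aperiodic w" and ur: "uniformly_recurrent w"
  shows "\<exists>L. \<forall>m x y. (\<forall>s < L*r^m. w (x+s) = w (y+s)) \<longrightarrow> x mod r^m = y mod r^m"
proof -
  define \<Lambda> where "\<Lambda> = r^(2*card (UNIV :: 'a set))+1"
  obtain B where B: "\<forall>i j. \<exists>t. t + \<Lambda> \<le> B \<and> (\<forall>s<\<Lambda>. w (i+s) = w (j+t+s))"
    using ur unfolding uniformly_recurrent_def by blast
  have sy: "\<exists>x0. \<forall>x. fac (blk w r m) \<Lambda> x = fac (blk w r m) \<Lambda> x0 \<longrightarrow> x mod r = x0 mod r" for m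
    unfolding \<Lambda>_def
    using sync[OF blk_G[OF FP] conjunct1[OF blk_range[OF FP]] r blk_aper[OF aper r] conjunct2[OF blk_range[OF FP]]] .
  define L where "L = B + 1"
  have main: "\<forall>x y. (\<forall>s < L*r^m. w (x+s) = w (y+s)) \<longrightarrow> x mod r^m = y mod r^m" for m
  proof (induction m)
    case 0 then show ?case by simp
  next
    case (Suc m)
    show ?case
    proof (intro allI impI)
      fix x y assume eq: "\<forall>s < L*r^(Suc m). w (x+s) = w (y+s)"
      have le: "L*r^m \<le> L*r^(Suc m)" using r by simp
      have "\<forall>s < L*r^m. w (x+s) = w (y+s)"
      proof (intro allI impI)
        fix s assume "s < L*r^m"
        hence "s < L*r^(Suc m)" using le by linarith
        thus "w (x+s) = w (y+s)" using eq by blast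
      qed
      hence "x mod r^m = y mod r^m" using Suc.IH by blast
      define X where "X = x div r^m"
      define Y where "Y = y div r^m"
      define j where "j = x mod r^m"
      have rm: "r^m > 0" using r by simp
      have xX: "x = r^m*X + j" unfolding X_def j_def by simp
      have yY: "y = r^m*Y + j" unfolding Y_def j_def using \<open>x mod r^m = y mod r^m\<close> by simp
      have j: "j < r^m" unfolding j_def using rm by simp
      obtain x0 where x0: "\<forall>x. fac (blk w r m) \<Lambda> x = fac (blk w r m) \<Lambda> x0 \<longrightarrow> x mod r = x0 mod r"
        using sy by blast
      obtain t where t: "t + \<Lambda> \<le> B" "\<forall>s<\<Lambda>. w (x0+s) = w (X+1+t+s)" using B by blast
      define n where "n = X+1+t"
      define n' where "n' = Y+1+t"
      have nfx: "fac (blk w r m) \<Lambda> n = fac (blk w r m) \<Lambda> x0"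
        unfolding fac_eq_iff
      proof (intro allI impI)
        fix s assume "s < \<Lambda>"
        hence "w (n+s) = w (x0+s)" using t(2) unfolding n_def by simp
        thus "blk w r m (n+s) = blk w r m (x0+s)" by (rule blk_letter[OF FP])
      qed
      have nx0: "n mod r = x0 mod r" using x0 nfx by blast
      have n'fx: "fac (blk w r m) \<Lambda> n' = fac (blk w r m) \<Lambda> n"
        unfolding fac_eq_iff
      proof (intro allI impI)
        fix s assume s: "s < \<Lambda>"
        show "blk w r m (n'+s) = blk w r m (n+s)"
          unfolding blk_def fac_eq_iff
        proof (intro allI impI)
          fix q assume q: "q < r^m"
          define d where "d = r^m*(1+t+s) + q - j"
          have jle: "j \<le> r^m*(1+t+s)" 
          proof -
            have "r^m*1 \<le> r^m*(1+t+s)" by (intro mult_le_mono2) simp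
            thus ?thesis using j by simp
          qed
          have dx: "x + d = r^m*(n+s)+q" unfolding d_def xX n_def using jle by (simp add: algebra_simps)
          have dy: "y + d = r^m*(n'+s)+q" unfolding d_def yY n'_def using jle by (simp add: algebra_simps)
          have "d < r^m*(1+t+s) + r^m" unfolding d_def using q by simp
          also have "\<dots> = r^m*(2+t+s)" by (simp add: algebra_simps)
          also have "\<dots> \<le> r^m*L" unfolding L_def using s t(1) by (intro mult_le_mono2) simp
          also have "\<dots> = L*r^m" by (rule mult.commute)
          also have "\<dots> \<le> L*r^(Suc m)" by (rule le)
          finally have "w (x+d) = w (y+d)" using eq by blast
          thus "w (r^m*(n'+s)+q) = w (r^m*(n+s)+q)" using dx dy by simp
        qed
      qed
      have "n' mod r = x0 mod r" using x0 n'fx nfx by metis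
      hence "(Y+(1+t)) mod r = (X+(1+t)) mod r" using nx0 unfolding n_def n'_def by (simp add: add.assoc)
      hence XY: "X mod r = Y mod r" by (metis mod_cancel_nat)
      have "x mod (r^m*r) = r^m*(X mod r) + j"
        unfolding mod_mult2_eq X_def j_def by simp
      moreover have "y mod (r^m*r) = r^m*(Y mod r) + j"
        unfolding mod_mult2_eq Y_def j_def using \<open>x mod r^m = y mod r^m\<close> by simp
      ultimately show "x mod r^(Suc m) = y mod r^(Suc m)" using XY by (simp add: mult.commute)
    qed
  qed
  thus ?thesis by blast
qed



lemma morph_len:
  assumes "uniform_morphism r \<mu>"
  shows "length (morph_apply \<mu> xs) = r * length xs"
  using assms by (induction xs) (simp_all add: morph_apply_def uniform_morphism_def)

lemma morph_pow_len:
  assumes "uniform_morphism r \<mu>"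
  shows "length ((morph_apply \<mu> ^^ n) [a]) = r ^ n"
  by (induction n) (simp_all add: morph_len[OF assms])

lemma morph_nth:
  assumes u: "uniform_morphism r \<mu>"
  shows "k < length xs \<Longrightarrow> j < r \<Longrightarrow> morph_apply \<mu> xs ! (r*k+j) = \<mu> (xs!k) ! j"
proof (induction xs arbitrary: k)
  case Nil then show ?case by simp
next
  case (Cons x xs)
  have lx: "length (\<mu> x) = r" using u by (simp add: uniform_morphism_def)
  have ma: "morph_apply \<mu> (x#xs) = \<mu> x @ morph_apply \<mu> xs" by (simp add: morph_apply_def)
  show ?case
  proof (cases k)
    case 0 then show ?thesis using Cons.prems lx ma by (simp add: nth_append)
  next
    case (Suc k')
    have "r*k+j = r + (r*k'+j)" using Suc by simp
    then show ?thesis using Cons Suc lx ma by (simp add: nth_append)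
  qed
qed

lemma FP_of:
  assumes r: "r \<ge> 2" and u: "uniform_morphism r \<mu>" and fp: "is_fixed_point_word \<mu> a w"
  shows "\<forall>k j. j < r \<longrightarrow> w (r*k+j) = \<mu> (w k) ! j"
proof (intro allI impI)
  fix k j assume j: "j < r"
  define xs where "xs = (morph_apply \<mu> ^^ k) [a]"
  have lxs: "length xs = r^k" unfolding xs_def by (rule morph_pow_len[OF u])
  have "k < 2^k" by simp
  also have "\<dots> \<le> r^k" using r by (simp add: power_mono)
  finally have k: "k < length xs" using lxs by simp
  have "r*k+j < r*(k+1)" using j by simp
  also have "\<dots> \<le> r * length xs" using k by (intro mult_le_mono2) simp
  finally have lt: "r*k+j < length (morph_apply \<mu> xs)" using morph_len[OF u] by simp
  have "w (r*k+j) = (morph_apply \<mu> ^^ Suc k) [a] ! (r*k+j)"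
    using fp lt unfolding is_fixed_point_word_def xs_def by (metis funpow.simps(2) o_apply)
  also have "\<dots> = morph_apply \<mu> xs ! (r*k+j)" unfolding xs_def by simp
  also have "\<dots> = \<mu> (xs!k) ! j" by (rule morph_nth[OF u k j])
  also have "xs!k = w k" using fp k unfolding is_fixed_point_word_def xs_def by simp
  finally show "w (r*k+j) = \<mu> (w k) ! j" .
qed

lemma exm:
  fixes r k :: nat
  assumes r: "r \<ge> 2" and k: "k \<ge> 1"
  shows "\<exists>m. k \<le> r^m \<and> r^m \<le> r*k"
proof -
  have ex: "k \<le> r^k"
  proof -
    have "k < 2^k" by simp
    also have "\<dots> \<le> r^k" using r by (simp add: power_mono)
    finally show ?thesis by simp
  qed
  define m where "m = (LEAST m. k \<le> r^m)"
  have m: "k \<le> r^m" unfolding m_def by (rule LeastI[of _ k]) (rule ex)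
  have "r^m \<le> r*k"
  proof (cases m)
    case 0 then show ?thesis using k r by simp
  next
    case (Suc m')
    have "\<not> k \<le> r^m'" using Suc unfolding m_def by (metis lessI not_less_Least)
    then show ?thesis using Suc by simp
  qed
  thus ?thesis using m by blast
qed

theorem theorem5:
  fixes \<mu> :: "'a::finite \<Rightarrow> 'a list" and a :: 'a and w :: "nat \<Rightarrow> 'a" and r :: nat
  assumes "r \<ge> 2" and "uniform_morphism r \<mu>" and "prolongable_on \<mu> a"
    and "is_fixed_point_word \<mu> a w"
    and "aperiodic w" and "uniformly_recurrent w"
  shows "\<exists>c::nat. \<forall>k::nat. \<forall>i::nat. k > 0 \<longrightarrow>
           (\<exists>l. 0 < l \<and> l \<le> c * k \<and> antipower_at w i k l)"
proof -
  have FP0: "\<forall>k j. j < r \<longrightarrow> w (r*k+j) = \<mu> (w k) ! j" by (rule FP_of[OF assms(1,2,4)])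
  have FP: "\<forall>k k' j. j < r \<longrightarrow> w k = w k' \<longrightarrow> w (r*k+j) = w (r*k'+j)" using FP0 by metis
  have r1: "r \<ge> 1" using assms(1) by simp
  obtain L where L: "\<forall>m x y. (\<forall>s < L*r^m. w (x+s) = w (y+s)) \<longrightarrow> x mod r^m = y mod r^m"
    using rec[OF FP r1 assms(5,6)] by blast
  show ?thesis
  proof (rule exI[of _ "L*r+1"], intro allI impI)
    fix k i :: nat assume k: "k > 0"
    obtain m where m: "k \<le> r^m" "r^m \<le> r*k" using exm[OF assms(1), of k] k by auto
    define l where "l = L*r^m+1"
    have "l \<le> L*(r*k)+1" unfolding l_def using m(2) by simp
    also have "\<dots> \<le> (L*r+1)*k" using k by (simp add: algebra_simps)
    finally have lc: "l \<le> (L*r+1)*k" .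
    have noeq: "\<not> (\<forall>s<l. w (i+p*l+s) = w (i+q*l+s))" if pq: "p < q" "q < k" for p q
    proof
      assume h: "\<forall>s<l. w (i+p*l+s) = w (i+q*l+s)"
      have "\<forall>s<L*r^m. w (i+p*l+s) = w (i+q*l+s)" using h unfolding l_def by simp
      hence "(i+p*l) mod r^m = (i+q*l) mod r^m" using L by blast
      moreover have "i+q*l = (q-p)*l + (i+p*l)" using pq by (simp add: algebra_simps)
      ultimately have "(0 + (i+p*l)) mod r^m = ((q-p)*l + (i+p*l)) mod r^m" by simp
      hence "0 mod r^m = ((q-p)*l) mod r^m" by (rule mod_cancel_nat)
      moreover have "(q-p)*l = (q-p) + ((q-p)*L)*r^m" unfolding l_def by (simp add: algebra_simps)
      ultimately have "0 = (q-p) mod r^m" by (metis mod_mult_self1 mod_0)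
      moreover have "q - p < r^m" using pq m(1) by simp
      ultimately show False using pq by simp
    qed
    have "antipower_at w i k l"
      unfolding antipower_at_def
    proof (intro allI impI)
      fix p q assume p: "p < k" and q: "q < k" and pq: "p \<noteq> q"
      show "map (\<lambda>s. w (i + p * l + s)) [0..<l] \<noteq> map (\<lambda>s. w (i + q * l + s)) [0..<l]"
      proof (cases "p < q")
        case True then show ?thesis using noeq[OF True q] by auto
      next
        case False
        hence "q < p" using pq by simp
        then show ?thesis using noeq[OF _ p, of q] by (auto simp: map_eq_conv) (metis atLeastLessThan_iff zero_le)
      qed
    qed
    moreover have "0 < l" unfolding l_def by simp
    ultimately show "\<exists>l. 0 < l \<and> l \<le> (L*r+1) * k \<and> antipower_at w i k l" using lc by blast
  qed
qed

end
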